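(* Let $g\in H(\mathbb D)$ and $\alpha,\beta\geq0$. Then: (1) $S_g: H^{\infty}_\alpha\rightarrow H^{\infty}_0$ is compact if and only if $g\equiv0$; (2) if $\beta>0$, then $S_g: H^{\infty}_\alpha\rightarrow H^{\infty}_\beta$ is compact if and only if $$\lim_{|z|\rightarrow1^-}(1-|z|^2)^{\beta-\alpha}|g(z)|=0\,.$$
   Context: $\mathbb D$ is the open unit disk and $H(\mathbb D)$ the space of analytic functions on $\mathbb D$. For $\alpha\geq0$, $H^{\infty}_\alpha=\{f\in H(\mathbb D): \|f\|_{H^\infty_\alpha}:=\sup_{z\in\mathbb D}(1-|z|^2)^\alpha|f(z)|<\infty\}$; $H^\infty_0$ is the space of bounded analytic functions with sup norm. For $g\in H(\mathbb D)$, $(S_gf)(z)=\int_0^z f'(\omega)g(\omega)\,d\omega$. *)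

theory Defs
  imports "HOL-Complex_Analysis.Complex_Analysis"
begin

definition Hinf :: "real \<Rightarrow> (complex \<Rightarrow> complex) set" where
  "Hinf a = {f. f holomorphic_on ball 0 1 \<and>
      bounded ((\<lambda>z. (1 - (cmod z)\<^sup>2) powr a * cmod (f z)) ` ball 0 1)}"

definition wnorm :: "real \<Rightarrow> (complex \<Rightarrow> complex) \<Rightarrow> real" where
  "wnorm a f = (SUP z\<in>ball 0 1. (1 - (cmod z)\<^sup>2) powr a * cmod (f z))"

definition Sg :: "(complex \<Rightarrow> complex) \<Rightarrow> (complex \<Rightarrow> complex) \<Rightarrow> complex \<Rightarrow> complex" where
  "Sg g f z = contour_integral (linepath 0 z) (\<lambda>w. deriv f w * g w)"

definition compact_Sg :: "real \<Rightarrow> real \<Rightarrow> (complex \<Rightarrow> complex) \<Rightarrow> bool" where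
  "compact_Sg a b g \<longleftrightarrow>
     (\<forall>f\<in>Hinf a. Sg g f \<in> Hinf b) \<and>
     (\<forall>F::nat \<Rightarrow> complex \<Rightarrow> complex. (\<forall>n. F n \<in> Hinf a \<and> wnorm a (F n) \<le> 1) \<longrightarrow>
        (\<exists>r h. strict_mono r \<and> h \<in> Hinf b \<and>
           (\<lambda>n. wnorm b (\<lambda>z. Sg g (F (r n)) z - h z)) \<longlonglongrightarrow> 0))"

end

theory Submission
  imports Defs
begin
lemma Sg_zero [simp]: "Sg g f 0 = 0"
  by (simp add: Sg_def)

lemma Sg_deriv:
  assumes f: "f holomorphic_on ball 0 1" and g: "g holomorphic_on ball 0 1" and z: "z \<in> ball 0 1"
  shows "(Sg g f has_field_derivative deriv f z * g z) (at z)"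
proof -
  have hol: "(\<lambda>w. deriv f w * g w) holomorphic_on ball 0 1"
    using f g by (intro holomorphic_on_mult holomorphic_deriv) auto
  obtain P where P: "\<And>x. x \<in> ball 0 1 \<Longrightarrow> (P has_field_derivative deriv f x * g x) (at x within ball 0 1)"
    using holomorphic_convex_primitive'[OF convex_ball open_ball hol] by blast
  have eq: "Sg g f w = P w - P 0" if w: "w \<in> ball 0 1" for w
  proof -
    have "path_image (linepath 0 w) \<subseteq> ball 0 1"
      using w by (simp add: closed_segment_subset convex_ball)
    from contour_integral_primitive[OF P valid_path_linepath this]
    show ?thesis unfolding Sg_def by (simp add: contour_integral_unique)
  qed
  have "(P has_field_derivative deriv f z * g z) (at z)"
    using P[OF z] at_within_open[OF z open_ball] by metis
  then have "((\<lambda>w. P w - P 0) has_field_derivative deriv f z * g z) (at z)"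
    by (auto intro!: derivative_eq_intros)
  then show ?thesis
    by (rule has_field_derivative_transform_within_open[OF _ open_ball z]) (simp add: eq)
qed
lemma Sg_holo:
  assumes f: "f holomorphic_on ball 0 1" and g: "g holomorphic_on ball 0 1"
  shows "Sg g f holomorphic_on ball 0 1"
  using Sg_deriv[OF f g] holomorphic_on_open open_ball by blast

lemma Sg_deriv_eq:
  assumes f: "f holomorphic_on ball 0 1" and g: "g holomorphic_on ball 0 1" and z: "z \<in> ball 0 1"
  shows "deriv (Sg g f) z = deriv f z * g z"
  using Sg_deriv[OF assms] by (rule DERIV_imp_deriv)

lemma weight_pos: "z \<in> ball 0 1 \<Longrightarrow> 0 < 1 - (cmod z)\<^sup>2"
  by (simp add: abs_square_less_1)

lemma wnorm_upper:
  assumes "f \<in> Hinf a" "z \<in> ball 0 1"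
  shows "(1 - (cmod z)\<^sup>2) powr a * cmod (f z) \<le> wnorm a f"
  using assms unfolding Hinf_def wnorm_def
  by (auto intro!: cSUP_upper bounded_imp_bdd_above)

lemma wnorm_le:
  assumes "\<And>z. z \<in> ball 0 1 \<Longrightarrow> (1 - (cmod z)\<^sup>2) powr a * cmod (f z) \<le> M"
  shows "wnorm a f \<le> M"
  unfolding wnorm_def using assms by (intro cSUP_least) auto

lemma bounded_from_le:
  assumes "\<And>z. z \<in> ball 0 1 \<Longrightarrow> (1 - (cmod z)\<^sup>2) powr a * cmod (f z) \<le> M"
  shows "bounded ((\<lambda>z. (1 - (cmod z)\<^sup>2) powr a * cmod (f z)) ` ball 0 1)"
  unfolding bounded_iff using assms by (intro exI[of _ M]) auto

lemma wnorm_nonneg: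
  assumes "\<And>z. z \<in> ball 0 1 \<Longrightarrow> (1 - (cmod z)\<^sup>2) powr a * cmod (f z) \<le> M"
  shows "0 \<le> wnorm a f"
proof -
  have "(1 - (cmod 0)\<^sup>2) powr a * cmod (f 0) \<le> wnorm a f"
    unfolding wnorm_def using bounded_from_le[OF assms]
    by (intro cSUP_upper bounded_imp_bdd_above) auto
  then show ?thesis by (smt (verit) mult_nonneg_nonneg norm_ge_zero powr_ge_zero)
qed

lemma Hinf_I:
  assumes "f holomorphic_on ball 0 1" "\<And>z. z \<in> ball 0 1 \<Longrightarrow> (1 - (cmod z)\<^sup>2) powr a * cmod (f z) \<le> M"
  shows "f \<in> Hinf a"
  using assms bounded_from_le unfolding Hinf_def by blast

lemma Hinf_le: "f \<in> Hinf a \<Longrightarrow> wnorm a f \<le> M \<Longrightarrow> z \<in> ball 0 1 \<Longrightarrow> (1 - (cmod z)\<^sup>2) powr a * cmod (f z) \<le> M"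
  using wnorm_upper by force


lemma wcauchy:
  assumes hol: "\<phi> holomorphic_on ball 0 1" and b: "b \<ge> 0"
    and N: "\<And>w. w \<in> ball 0 1 \<Longrightarrow> (1 - (cmod w)\<^sup>2) powr b * cmod (\<phi> w) \<le> N"
    and z: "z \<in> ball 0 1"
  shows "cmod (deriv \<phi> z) \<le> 4 powr (b+1) * N / (1 - (cmod z)\<^sup>2) powr (b+1)"
proof -
  define r where "r = cmod z"
  have r: "0 \<le> r" "r < 1" using z by (auto simp: r_def)
  define \<rho> where "\<rho> = (1 - r) / 2"
  have \<rho>: "0 < \<rho>" using r by (simp add: \<rho>_def)
  have N0: "0 \<le> N" using N[of 0] by (smt (verit) mult_nonneg_nonneg norm_ge_zero powr_ge_zero centre_in_ball zero_less_one)
  have sub: "cball z \<rho> \<subseteq> ball 0 1"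
  proof
    fix x assume "x \<in> cball z \<rho>"
    then have "cmod x \<le> r + \<rho>" using norm_triangle_ineq2[of x z] by (auto simp: dist_norm r_def norm_minus_commute)
    then show "x \<in> ball 0 1" using r unfolding \<rho>_def by (simp add: field_simps)
  qed
  have q: "0 < 1 - r\<^sup>2" using r by (simp add: abs_square_less_1)
  define B where "B = N * 4 powr b / (1 - r\<^sup>2) powr b"
  have bnd: "cmod (\<phi> x) \<le> B" if x: "norm (z - x) = \<rho>" for x
  proof -
    have xb: "x \<in> ball 0 1" using x sub by (auto simp: dist_norm)
    have xr: "cmod x \<le> r + \<rho>" using x norm_triangle_ineq2[of x z] by (auto simp: r_def norm_minus_commute)
    have e1: "0 \<le> (1 - r) * (1 - r)" by simp
    have e2: "1 - r\<^sup>2 \<le> 2 * (1 - r)" using e1 by (simp add: power2_eq_square algebra_simps)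
    have "(1 - r\<^sup>2) / 4 \<le> 1 - cmod x" using xr e2 unfolding \<rho>_def by (simp add: field_simps)
    also have "\<dots> \<le> 1 - (cmod x)\<^sup>2"
    proof -
      have "cmod x * cmod x \<le> cmod x * 1" using xb by (intro mult_left_mono) auto
      then show ?thesis by (simp add: power2_eq_square)
    qed
    finally have le: "(1 - r\<^sup>2) / 4 \<le> 1 - (cmod x)\<^sup>2" .
    have pos: "0 < 1 - (cmod x)\<^sup>2" using weight_pos[OF xb] .
    have "((1 - r\<^sup>2) / 4) powr b \<le> (1 - (cmod x)\<^sup>2) powr b"
      using le q b by (intro powr_mono2) auto
    then have A: "(1 - r\<^sup>2) powr b / 4 powr b \<le> (1 - (cmod x)\<^sup>2) powr b"
      using q by (simp add: powr_divide)
    have "(1 - r\<^sup>2) powr b / 4 powr b * cmod (\<phi> x) \<le> N"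
      using mult_right_mono[OF A norm_ge_zero[of "\<phi> x"]] N[OF xb] by linarith
    then show ?thesis using q unfolding B_def by (simp add: field_simps)
  qed
  have "cmod ((deriv ^^ 1) \<phi> z) \<le> fact 1 * B / \<rho> ^ 1"
    by (rule Cauchy_inequality[OF holomorphic_on_subset[OF hol] holomorphic_on_imp_continuous_on[OF holomorphic_on_subset[OF hol sub]] \<rho> bnd])
       (use sub in auto)
  then have D: "cmod (deriv \<phi> z) \<le> 2 * B / (1 - r)" by (simp add: \<rho>_def mult.commute)
  have "2 * B / (1 - r) \<le> 4 * B / (1 - r\<^sup>2)"
  proof -
    have B0: "0 \<le> B" using N0 by (simp add: B_def)
    have f: "1 - r\<^sup>2 = (1 - r) * (1 + r)" by (simp add: power2_eq_square algebra_simps)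
    have nz: "1 - r \<noteq> 0" "1 + r \<noteq> 0" using r by auto
    have "2 / (1 - r) = 2 * (1 + r) / (1 - r\<^sup>2)" unfolding f using nz(2) by (metis nonzero_mult_divide_mult_cancel_right)
    also have "\<dots> \<le> 4 / (1 - r\<^sup>2)" using r q by (intro divide_right_mono) auto
    finally have "2 / (1 - r) \<le> 4 / (1 - r\<^sup>2)" .
    then show ?thesis using B0 by (metis mult.commute times_divide_eq_right mult_left_mono)
  qed
  also have "\<dots> = 4 powr (b+1) * N / (1 - r\<^sup>2) powr (b+1)"
    using q by (simp add: B_def powr_add field_simps)
  finally show ?thesis using D unfolding r_def by linarith
qed

lemma growth:
  assumes b: "b > 0" and d: "\<And>w. w \<in> ball 0 1 \<Longrightarrow> (\<phi> has_field_derivative \<phi>' w) (at w)"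
    and \<phi>0: "\<phi> 0 = 0"
    and bd: "\<And>w. w \<in> ball 0 1 \<Longrightarrow> cmod (\<phi>' w) \<le> A + B / (1 - cmod w) powr (b+1)"
    and A: "A \<ge> 0" and B: "B \<ge> 0" and z: "z \<in> ball 0 1"
  shows "(1 - (cmod z)\<^sup>2) powr b * cmod (\<phi> z) \<le> A + B * 2 powr b / b"
proof -
  define r where "r = cmod z"
  have r: "0 \<le> r" "r < 1" using z by (auto simp: r_def)
  define f where "f = (\<lambda>t::real. \<phi> (of_real t * z))"
  define f' where "f' = (\<lambda>t::real. \<phi>' (of_real t * z) * z)"
  define \<psi> where "\<psi> = (\<lambda>t::real. A * r * t + (B / b) * (1 - t * r) powr (- b))"
  define \<psi>' where "\<psi>' = (\<lambda>t::real. A * r + B * r * (1 - t * r) powr (- b - 1))"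
  have tz: "of_real t * z \<in> ball 0 1" if "0 \<le> t" "t \<le> 1" for t
  proof -
    have "cmod (of_real t * z) = t * r" using that by (simp add: norm_mult r_def)
    also have "\<dots> \<le> r" using that r by (simp add: mult_left_le_one_le)
    finally show ?thesis using r by simp
  qed
  have fd: "(f has_vector_derivative f' t) (at t)" if "0 \<le> t" "t \<le> 1" for t
  proof -
    have "((\<lambda>w. \<phi> (w * z)) has_field_derivative \<phi>' (of_real t * z) * z) (at (of_real t))"
    proof -
      have dz: "((\<lambda>w. w * z) has_field_derivative z) (at (of_real t))"
        by (auto intro!: derivative_eq_intros)
      show ?thesis using DERIV_chain2[OF d[OF tz[OF that]] dz] by simp
    qed
    from has_vector_derivative_real_field[OF this] show ?thesis
      unfolding f_def f'_def by simp
  qed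
  have pos: "0 < 1 - t * r" if "0 \<le> t" "t \<le> 1" for t
  proof -
    have "t * r \<le> r" using that r by (simp add: mult_left_le_one_le)
    then show ?thesis using r by simp
  qed
  have \<psi>d: "(\<psi> has_vector_derivative \<psi>' t) (at t)" if "0 \<le> t" "t \<le> 1" for t
  proof -
    have d1: "((\<lambda>t. 1 - t * r) has_real_derivative (- r)) (at t)"
      by (auto intro!: derivative_eq_intros)
    have d2: "((\<lambda>t. (1 - t * r) powr (- b)) has_real_derivative (- b) * (1 - t * r) powr (- b - of_nat 1) * (- r)) (at t)"
      by (rule DERIV_fun_powr[OF d1 pos[OF that]])
    have "(\<psi> has_real_derivative A * r * 1 + (B / b) * ((- b) * (1 - t * r) powr (- b - of_nat 1) * (- r))) (at t)"
      unfolding \<psi>_def by (intro DERIV_add DERIV_cmult d2 DERIV_ident)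
    moreover have "A * r * 1 + (B / b) * ((- b) * (1 - t * r) powr (- b - of_nat 1) * (- r)) = \<psi>' t"
      using b by (simp add: \<psi>'_def)
    ultimately show ?thesis by (simp add: has_real_derivative_iff_has_vector_derivative)
  qed
  have fc: "continuous_on {0..1} f"
    by (intro continuous_at_imp_continuous_on ballI has_vector_derivative_continuous[OF fd]) auto
  have \<psi>c: "continuous_on {0..1} \<psi>"
    by (intro continuous_at_imp_continuous_on ballI has_vector_derivative_continuous[OF \<psi>d]) auto
  have bnd: "norm (f' t) \<le> \<psi>' t" if "0 < t" "t < 1" for t
  proof -
    have tb: "of_real t * z \<in> ball 0 1" using tz that by auto
    have n: "cmod (of_real t * z) = t * r" using that by (simp add: norm_mult r_def)
    have "norm (f' t) = cmod (\<phi>' (of_real t * z)) * r" by (simp add: f'_def norm_mult r_def)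
    also have "\<dots> \<le> (A + B / (1 - t * r) powr (b+1)) * r"
      using bd[OF tb] r n by (intro mult_right_mono) auto
    also have "\<dots> = \<psi>' t"
    proof -
      have e: "- b - 1 = - (b + 1)" by simp
      show ?thesis unfolding \<psi>'_def e powr_minus by (simp add: algebra_simps divide_inverse)
    qed
    finally show ?thesis .
  qed
  have main: "norm (f 1 - f 0) \<le> \<psi> 1 - \<psi> 0"
    by (rule differentiable_bound_general[OF zero_less_one fc \<psi>c, of f' \<psi>'])
       (use fd \<psi>d bnd in auto)
  have "f 1 = \<phi> z" "f 0 = 0" using \<phi>0 by (auto simp: f_def)
  then have "cmod (\<phi> z) \<le> A * r + (B / b) * (1 - r) powr (- b) - B / b"
    using main by (simp add: \<psi>_def)
  also have "\<dots> \<le> A + (B / b) * (1 - r) powr (- b)"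
  proof -
    have "A * r \<le> A" using r A by (simp add: mult_left_le)
    moreover have "0 \<le> B / b" using B b by simp
    ultimately show ?thesis by linarith
  qed
  finally have phz: "cmod (\<phi> z) \<le> A + (B / b) * (1 - r) powr (- b)" .
  have q: "0 < 1 - r\<^sup>2" "1 - r\<^sup>2 \<le> 1" using r by (auto simp: abs_square_less_1)
  have w1: "(1 - r\<^sup>2) powr b \<le> 1" using q b by (intro powr_le1) auto
  have w2: "(1 - r\<^sup>2) powr b * (1 - r) powr (- b) \<le> 2 powr b"
  proof -
    have f: "1 - r\<^sup>2 = (1 + r) * (1 - r)" by (simp add: power2_eq_square algebra_simps)
    have "(1 - r\<^sup>2) powr b * (1 - r) powr (- b) = (1 + r) powr b"
      using r unfolding f by (simp add: powr_mult powr_minus)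
    also have "\<dots> \<le> 2 powr b" using r b by (intro powr_mono2) auto
    finally show ?thesis .
  qed
  have "(1 - r\<^sup>2) powr b * cmod (\<phi> z) \<le> (1 - r\<^sup>2) powr b * (A + (B / b) * (1 - r) powr (- b))"
    using phz by (intro mult_left_mono) auto
  also have "\<dots> = (1 - r\<^sup>2) powr b * A + (B / b) * ((1 - r\<^sup>2) powr b * (1 - r) powr (- b))"
    by (simp add: algebra_simps)
  also have "\<dots> \<le> 1 * A + (B / b) * 2 powr b"
    using w1 w2 A B b by (intro add_mono mult_right_mono mult_left_mono) auto
  finally show ?thesis by (simp add: r_def)
qed

definition cond :: "real \<Rightarrow> real \<Rightarrow> (complex \<Rightarrow> complex) \<Rightarrow> bool" where
  "cond a b g \<longleftrightarrow> (\<forall>\<epsilon>>0. \<exists>r<1. \<forall>z. r < cmod z \<and> cmod z < 1 \<longrightarrow>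
                   (1 - (cmod z)\<^sup>2) powr (b - a) * cmod (g z) < \<epsilon>)"

lemma dbound_outer:
  assumes f: "f holomorphic_on ball 0 1" and a: "a \<ge> 0" and b: "b \<ge> 0"
    and N: "\<And>w. w \<in> ball 0 1 \<Longrightarrow> (1 - (cmod w)\<^sup>2) powr a * cmod (f w) \<le> N"
    and w: "w \<in> ball 0 1" and e: "(1 - (cmod w)\<^sup>2) powr (b - a) * cmod (g w) \<le> e"
  shows "cmod (deriv f w * g w) \<le> 4 powr (a+1) * N * e / (1 - cmod w) powr (b+1)"
proof -
  define u where "u = 1 - (cmod w)\<^sup>2"
  define v where "v = 1 - cmod w"
  have u: "0 < u" using weight_pos[OF w] by (simp add: u_def)
  have v: "0 < v" "v \<le> u" using w by (auto simp: u_def v_def power2_eq_square mult_left_le_one_le)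
  have N0: "0 \<le> N" using N[of 0] by (metis centre_in_ball zero_less_one mult_nonneg_nonneg norm_ge_zero powr_ge_zero order_trans)
  have e0: "0 \<le> e" using e by (metis mult_nonneg_nonneg norm_ge_zero powr_ge_zero order_trans)
  have d: "cmod (deriv f w) \<le> 4 powr (a+1) * N / u powr (a+1)"
    using wcauchy[OF f a N w] by (simp add: u_def)
  have gw: "cmod (g w) \<le> e / u powr (b - a)"
    using e u by (simp add: u_def pos_le_divide_eq mult.commute)
  have "cmod (deriv f w * g w) = cmod (deriv f w) * cmod (g w)" by (simp add: norm_mult)
  also have "\<dots> \<le> (4 powr (a+1) * N / u powr (a+1)) * (e / u powr (b - a))"
    using d gw N0 by (intro mult_mono) auto
  also have "\<dots> = 4 powr (a+1) * N * e / (u powr (a+1) * u powr (b - a))"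
    by simp
  also have "u powr (a+1) * u powr (b - a) = u powr (b + 1)"
    by (simp add: powr_add[symmetric] add.commute)
  also have "4 powr (a+1) * N * e / u powr (b + 1) \<le> 4 powr (a+1) * N * e / v powr (b + 1)"
    using u v N0 e0 b by (intro divide_left_mono powr_mono2 mult_pos_pos) auto
  finally show ?thesis by (simp add: v_def)
qed

lemma g_bound:
  assumes g: "g holomorphic_on ball 0 1" and "0 \<le> \<rho>" "\<rho> < 1"
  obtains G where "0 \<le> G" "\<And>w. w \<in> cball 0 \<rho> \<Longrightarrow> cmod (g w) \<le> G"
proof -
  have sub: "cball 0 \<rho> \<subseteq> ball (0::complex) 1" using assms by auto
  have "compact (g ` cball 0 \<rho>)"
    using compact_continuous_image[OF continuous_on_subset[OF holomorphic_on_imp_continuous_on[OF g] sub] compact_cball] .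
  then obtain G where G: "\<forall>x\<in>g ` cball 0 \<rho>. norm x \<le> G"
    using compact_imp_bounded bounded_iff by metis
  then have "0 \<le> G" using assms by (metis centre_in_cball image_eqI norm_ge_zero order_trans)
  with G show ?thesis using that by auto
qed

lemma inner_bound:
  assumes f: "f holomorphic_on ball 0 1" and a: "a \<ge> 0"
    and N: "\<And>w. w \<in> ball 0 1 \<Longrightarrow> (1 - (cmod w)\<^sup>2) powr a * cmod (f w) \<le> N"
    and w: "cmod w \<le> \<rho>" and \<rho>: "\<rho> < 1"
  shows "cmod (deriv f w) \<le> 4 powr (a+1) * N / (1 - \<rho>\<^sup>2) powr (a+1)"
proof -
  have wb: "w \<in> ball 0 1" using w \<rho> by simp
  have N0: "0 \<le> N" using N[of 0] by (metis centre_in_ball zero_less_one mult_nonneg_nonneg norm_ge_zero powr_ge_zero order_trans)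
  have r0: "0 \<le> \<rho>" using w norm_ge_zero order_trans by blast
  have q: "0 < 1 - \<rho>\<^sup>2" using r0 \<rho> by (simp add: abs_square_less_1)
  have "(cmod w)\<^sup>2 \<le> \<rho>\<^sup>2" using w by (intro power_mono) auto
  then have le: "1 - \<rho>\<^sup>2 \<le> 1 - (cmod w)\<^sup>2" by simp
  have "4 powr (a+1) * N / (1 - (cmod w)\<^sup>2) powr (a+1) \<le> 4 powr (a+1) * N / (1 - \<rho>\<^sup>2) powr (a+1)"
    using q le N0 a by (intro divide_left_mono powr_mono2 mult_pos_pos mult_nonneg_nonneg) auto
  then show ?thesis using wcauchy[OF f a N wb] by linarith
qed

lemma Sg_in:
  assumes g: "g holomorphic_on ball 0 1" and a: "a \<ge> 0" and b: "b > 0" and c: "cond a b g"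
    and f: "f \<in> Hinf a"
  shows "Sg g f \<in> Hinf b"
proof -
  have fh: "f holomorphic_on ball 0 1" using f by (simp add: Hinf_def)
  define N where "N = wnorm a f"
  have Nb: "\<And>w. w \<in> ball 0 1 \<Longrightarrow> (1 - (cmod w)\<^sup>2) powr a * cmod (f w) \<le> N"
    using wnorm_upper[OF f] by (simp add: N_def)
  have N0: "0 \<le> N" using Nb[of 0] by (metis centre_in_ball zero_less_one mult_nonneg_nonneg norm_ge_zero powr_ge_zero order_trans)
  obtain r where r: "r < 1" "\<And>z. r < cmod z \<and> cmod z < 1 \<Longrightarrow> (1 - (cmod z)\<^sup>2) powr (b - a) * cmod (g z) < 1"
    using c unfolding cond_def by (meson zero_less_one)
  define \<rho> where "\<rho> = max r 0"
  have \<rho>: "0 \<le> \<rho>" "\<rho> < 1" using r by (auto simp: \<rho>_def)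
  obtain G where G: "0 \<le> G" "\<And>w. w \<in> cball 0 \<rho> \<Longrightarrow> cmod (g w) \<le> G"
    using g_bound[OF g \<rho>] by blast
  define A where "A = 4 powr (a+1) * N / (1 - \<rho>\<^sup>2) powr (a+1) * G"
  define B where "B = 4 powr (a+1) * N * 1"
  have A0: "0 \<le> A" using N0 G by (simp add: A_def)
  have B0: "0 \<le> B" using N0 by (simp add: B_def)
  have bd: "cmod (deriv f w * g w) \<le> A + B / (1 - cmod w) powr (b+1)" if w: "w \<in> ball 0 1" for w
  proof (cases "cmod w \<le> \<rho>")
    case True
    have "cmod (deriv f w * g w) = cmod (deriv f w) * cmod (g w)" by (simp add: norm_mult)
    also have "\<dots> \<le> (4 powr (a+1) * N / (1 - \<rho>\<^sup>2) powr (a+1)) * G"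
      using inner_bound[OF fh a Nb True \<rho>(2)] G True N0 by (intro mult_mono) auto
    also have "\<dots> = A" by (simp add: A_def)
    finally show ?thesis using B0 by (simp add: add_increasing2)
  next
    case False
    then have "r < cmod w" by (simp add: \<rho>_def)
    then have "(1 - (cmod w)\<^sup>2) powr (b - a) * cmod (g w) \<le> 1" using r(2)[of w] w by fastforce
    from dbound_outer[where g=g and e=1, OF fh a less_imp_le[OF b] Nb w this]
    have "cmod (deriv f w * g w) \<le> B / (1 - cmod w) powr (b+1)" by (simp add: B_def)
    then show ?thesis using A0 by linarith
  qed
  have est: "(1 - (cmod z)\<^sup>2) powr b * cmod (Sg g f z) \<le> A + B * 2 powr b / b" if z: "z \<in> ball 0 1" for z
    by (rule growth[OF b Sg_deriv[OF fh g] Sg_zero bd A0 B0 z])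
  show ?thesis by (rule Hinf_I[OF Sg_holo[OF fh g] est])
qed

lemma alg1: "(R::real) \<noteq> 0 \<Longrightarrow> H \<noteq> 0 \<Longrightarrow> 2 * (\<epsilon> * R / (8 * H)) / R * G = \<epsilon> / 4 * (G / H)"
  by (simp add: field_simps)

lemma alg2: "(C::real) \<noteq> 0 \<Longrightarrow> P \<noteq> 0 \<Longrightarrow> b \<noteq> 0 \<Longrightarrow> \<epsilon> / 4 + C * 2 * (\<epsilon> * b / (8 * C * P)) * P / b = \<epsilon> / 2"
  by (simp add: field_simps)

lemma cauchy_small:
  assumes k: "k holomorphic_on ball 0 1" and \<rho>: "0 \<le> \<rho>" "\<rho> < 1" and w: "cmod w \<le> \<rho>"
    and e: "\<And>x. x \<in> cball 0 ((1 + \<rho>) / 2) \<Longrightarrow> cmod (k x) \<le> e"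
  shows "cmod (deriv k w) \<le> 2 * e / (1 - \<rho>)"
proof -
  define \<delta> where "\<delta> = (1 - \<rho>) / 2"
  have \<delta>: "0 < \<delta>" using \<rho> by (simp add: \<delta>_def)
  have sub1: "cball w \<delta> \<subseteq> cball 0 ((1 + \<rho>) / 2)"
  proof
    fix x assume "x \<in> cball w \<delta>"
    then have "cmod x \<le> cmod w + \<delta>" using norm_triangle_ineq2[of x w]
      by (auto simp: dist_norm norm_minus_commute)
    also have "\<dots> \<le> (1 + \<rho>) / 2" using w by (simp add: \<delta>_def field_simps)
    finally show "x \<in> cball 0 ((1 + \<rho>) / 2)" by simp
  qed
  have sub2: "cball 0 ((1 + \<rho>) / 2) \<subseteq> ball (0::complex) 1" using \<rho> by (auto simp: field_simps)
  have sub: "cball w \<delta> \<subseteq> ball 0 1" using sub1 sub2 by blast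
  have "cmod ((deriv ^^ 1) k w) \<le> fact 1 * e / \<delta> ^ 1"
  proof (rule Cauchy_inequality[OF holomorphic_on_subset[OF k] holomorphic_on_imp_continuous_on[OF holomorphic_on_subset[OF k sub]] \<delta>])
    show "ball w \<delta> \<subseteq> ball 0 1" using sub ball_subset_cball by blast
    fix x assume "cmod (w - x) = \<delta>"
    then have "x \<in> cball w \<delta>" by (simp add: dist_norm)
    then show "cmod (k x) \<le> e" using e sub1 by blast
  qed
  then show ?thesis by (simp add: \<delta>_def mult.commute)
qed

lemma compact_in_ball:
  assumes "compact K" "K \<subseteq> ball (0::complex) 1"
  obtains \<rho> where "0 \<le> \<rho>" "\<rho> < 1" "K \<subseteq> cball 0 \<rho>"
proof (cases "K = {}")
  case True then show ?thesis using that[of 0] by auto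
next
  case False
  obtain x where x: "x \<in> K" "\<forall>y\<in>K. norm y \<le> norm x"
    using continuous_attains_sup[OF assms(1) False, of norm] continuous_on_norm_id by blast
  have "K \<subseteq> cball 0 (norm x)" using x(2) by auto
  moreover have "norm x < 1" using x(1) assms(2) by auto
  ultimately show ?thesis using that[of "norm x"] by auto
qed

lemma Sg_seq:
  fixes F :: "nat \<Rightarrow> complex \<Rightarrow> complex"
  assumes g: "g holomorphic_on ball 0 1" and a: "a \<ge> 0" and b: "b > 0" and c: "cond a b g"
    and F: "\<And>n. F n \<in> Hinf a \<and> wnorm a (F n) \<le> 1"
  shows "\<exists>r h. strict_mono r \<and> h \<in> Hinf b \<and> (\<lambda>n. wnorm b (\<lambda>z. Sg g (F (r n)) z - h z)) \<longlonglongrightarrow> 0"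
proof -
  have Fh: "\<And>n. F n holomorphic_on ball 0 1" using F by (simp add: Hinf_def)
  have Fb: "\<And>n w. w \<in> ball 0 1 \<Longrightarrow> (1 - (cmod w)\<^sup>2) powr a * cmod (F n w) \<le> 1"
    using F Hinf_le by blast
  have Fb2: "cmod (F n w) \<le> 1 / (1 - (cmod w)\<^sup>2) powr a" if "w \<in> ball 0 1" for n w
    using Fb[OF that, of n] weight_pos[OF that] by (simp add: pos_le_divide_eq mult.commute)
  obtain h0 rr where h0: "h0 holomorphic_on ball 0 1" and rr: "strict_mono rr"
    and pt: "\<And>x. x \<in> ball 0 1 \<Longrightarrow> (\<lambda>n. F (rr n) x) \<longlonglongrightarrow> h0 x"
    and un: "\<And>K. compact K \<Longrightarrow> K \<subseteq> ball 0 1 \<Longrightarrow> uniform_limit K (F \<circ> rr) h0 sequentially"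
  proof (rule Montel[OF open_ball, where \<H>="range F" and \<F>=F])
    show "\<And>h. h \<in> range F \<Longrightarrow> h holomorphic_on ball 0 1" using Fh by auto
    show "range F \<subseteq> range F" by simp
    fix K :: "complex set" assume K: "compact K" "K \<subseteq> ball 0 1"
    then obtain \<rho> where \<rho>: "0 \<le> \<rho>" "\<rho> < 1" "K \<subseteq> cball 0 \<rho>" using compact_in_ball by blast
    have q: "0 < 1 - \<rho>\<^sup>2" using \<rho> by (simp add: abs_square_less_1)
    show "\<exists>B. \<forall>h\<in>range F. \<forall>z\<in>K. cmod (h z) \<le> B"
    proof (intro exI ballI)
      fix h z assume h: "h \<in> range F" and z: "z \<in> K"
      then obtain n where n: "h = F n" by blast
      have zb: "z \<in> ball 0 1" using z K by auto
      have "(cmod z)\<^sup>2 \<le> \<rho>\<^sup>2" using z \<rho> by (intro power_mono) auto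
      then have le: "1 - \<rho>\<^sup>2 \<le> 1 - (cmod z)\<^sup>2" by simp
      have "1 / (1 - (cmod z)\<^sup>2) powr a \<le> 1 / (1 - \<rho>\<^sup>2) powr a"
        using q le a by (intro divide_left_mono powr_mono2) auto
      then show "cmod (h z) \<le> 1 / (1 - \<rho>\<^sup>2) powr a" using Fb2[OF zb, of n] unfolding n by linarith
    qed
  qed auto
  have h0b: "(1 - (cmod w)\<^sup>2) powr a * cmod (h0 w) \<le> 1" if w: "w \<in> ball 0 1" for w
  proof (rule LIMSEQ_le_const2)
    show "(\<lambda>n. (1 - (cmod w)\<^sup>2) powr a * cmod (F (rr n) w)) \<longlonglongrightarrow> (1 - (cmod w)\<^sup>2) powr a * cmod (h0 w)"
      by (intro tendsto_intros pt w)
    show "\<exists>N. \<forall>n\<ge>N. (1 - (cmod w)\<^sup>2) powr a * cmod (F (rr n) w) \<le> 1" using Fb[OF w] by blast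
  qed
  have h0H: "h0 \<in> Hinf a" using Hinf_I[OF h0 h0b] .
  define h where "h = Sg g h0"
  have hH: "h \<in> Hinf b" unfolding h_def by (rule Sg_in[OF g a b c h0H])
  have lim: "(\<lambda>n. wnorm b (\<lambda>z. Sg g (F (rr n)) z - h z)) \<longlonglongrightarrow> 0"
    unfolding LIMSEQ_iff
  proof (intro allI impI)
    fix \<epsilon> :: real assume \<epsilon>: "\<epsilon> > 0"
    define C where "C = 4 powr (a+1)"
    have C: "C > 0" by (simp add: C_def)
    define e1 where "e1 = \<epsilon> * b / (8 * C * 2 powr b)"
    have e1: "e1 > 0" using \<epsilon> b C by (simp add: e1_def)
    obtain r1 where r1: "r1 < 1" "\<And>z. r1 < cmod z \<and> cmod z < 1 \<Longrightarrow> (1 - (cmod z)\<^sup>2) powr (b - a) * cmod (g z) < e1"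
      using c e1 unfolding cond_def by meson
    define \<rho> where "\<rho> = max r1 0"
    have \<rho>: "0 \<le> \<rho>" "\<rho> < 1" using r1 by (auto simp: \<rho>_def)
    obtain G where G: "0 \<le> G" "\<And>w. w \<in> cball 0 \<rho> \<Longrightarrow> cmod (g w) \<le> G"
      using g_bound[OF g \<rho>] by blast
    define e2 where "e2 = \<epsilon> * (1 - \<rho>) / (8 * (G + 1))"
    have e2: "e2 > 0" using \<epsilon> \<rho> G by (simp add: e2_def)
    have Kc: "compact (cball (0::complex) ((1 + \<rho>) / 2))" by simp
    have Ks: "cball (0::complex) ((1 + \<rho>) / 2) \<subseteq> ball 0 1" using \<rho> by (auto simp: field_simps)
    have "\<forall>\<^sub>F n in sequentially. \<forall>x\<in>cball 0 ((1 + \<rho>) / 2). dist ((F \<circ> rr) n x) (h0 x) < e2"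
      using un[OF Kc Ks] e2 unfolding uniform_limit_iff by blast
    then obtain no where no: "\<And>n x. n \<ge> no \<Longrightarrow> x \<in> cball 0 ((1 + \<rho>) / 2) \<Longrightarrow> dist (F (rr n) x) (h0 x) < e2"
      unfolding eventually_sequentially comp_def by blast
    show "\<exists>no. \<forall>n\<ge>no. norm (wnorm b (\<lambda>z. Sg g (F (rr n)) z - h z) - 0) < \<epsilon>"
    proof (intro exI allI impI)
      fix n assume n: "n \<ge> no"
      define k where "k = (\<lambda>z. F (rr n) z - h0 z)"
      have kh: "k holomorphic_on ball 0 1" unfolding k_def using Fh h0 by (intro holomorphic_intros)
      have kb: "(1 - (cmod w)\<^sup>2) powr a * cmod (k w) \<le> 2" if w: "w \<in> ball 0 1" for w
      proof -
        have "cmod (k w) \<le> cmod (F (rr n) w) + cmod (h0 w)" unfolding k_def by (rule norm_triangle_ineq4)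
        then have "(1 - (cmod w)\<^sup>2) powr a * cmod (k w) \<le> (1 - (cmod w)\<^sup>2) powr a * cmod (F (rr n) w) + (1 - (cmod w)\<^sup>2) powr a * cmod (h0 w)"
          by (simp add: distrib_left[symmetric] mult_left_mono)
        then show ?thesis using Fb[OF w, of "rr n"] h0b[OF w] by linarith
      qed
      define \<phi>' where "\<phi>' = (\<lambda>w. deriv k w * g w)"
      have \<phi>d: "((\<lambda>z. Sg g (F (rr n)) z - h z) has_field_derivative \<phi>' w) (at w)" if w: "w \<in> ball 0 1" for w
      proof -
        have "deriv k w = deriv (F (rr n)) w - deriv h0 w"
          unfolding k_def using Fh h0 w
          by (intro deriv_diff holomorphic_on_imp_differentiable_at) auto
        then have e: "\<phi>' w = deriv (F (rr n)) w * g w - deriv h0 w * g w"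
          by (simp add: \<phi>'_def left_diff_distrib)
        show ?thesis unfolding e h_def
          by (intro DERIV_diff Sg_deriv Fh h0 g w)
      qed
      define A where "A = \<epsilon> / 4"
      define B where "B = C * 2 * e1"
      have A0: "0 \<le> A" "0 \<le> B" using \<epsilon> C e1 by (auto simp: A_def B_def)
      have bd: "cmod (\<phi>' w) \<le> A + B / (1 - cmod w) powr (b+1)" if w: "w \<in> ball 0 1" for w
      proof (cases "cmod w \<le> \<rho>")
        case True
        have kx: "cmod (k x) \<le> e2" if "x \<in> cball 0 ((1 + \<rho>) / 2)" for x
          using no[OF n that] by (simp add: k_def dist_norm less_imp_le)
        have dk: "cmod (deriv k w) \<le> 2 * e2 / (1 - \<rho>)"
          by (rule cauchy_small[OF kh \<rho> True kx])
        have "cmod (\<phi>' w) = cmod (deriv k w) * cmod (g w)" by (simp add: \<phi>'_def norm_mult)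
        also have "\<dots> \<le> (2 * e2 / (1 - \<rho>)) * G"
          using dk G True e2 \<rho> by (intro mult_mono) auto
        also have "\<dots> = \<epsilon> / 4 * (G / (G + 1))"
        proof -
          have nz: "1 - \<rho> \<noteq> 0" "G + 1 \<noteq> 0" using \<rho> G by auto
          show ?thesis unfolding e2_def by (rule alg1[OF nz])
        qed
        also have "\<dots> \<le> \<epsilon> / 4 * 1"
          using \<epsilon> G by (intro mult_left_mono) auto
        finally show ?thesis using A0 by (simp add: A_def add_increasing2)
      next
        case False
        then have "r1 < cmod w" by (simp add: \<rho>_def)
        then have "(1 - (cmod w)\<^sup>2) powr (b - a) * cmod (g w) \<le> e1" using r1(2)[of w] w by fastforce
        from dbound_outer[where g=g and e=e1, OF kh a less_imp_le[OF b] kb w this]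
        have "cmod (\<phi>' w) \<le> B / (1 - cmod w) powr (b+1)" by (simp add: B_def C_def \<phi>'_def mult.commute)
        then show ?thesis using A0 by linarith
      qed
      have z0: "(\<lambda>z. Sg g (F (rr n)) z - h z) 0 = 0" by (simp add: h_def)
      have est: "(1 - (cmod z)\<^sup>2) powr b * cmod (Sg g (F (rr n)) z - h z) \<le> A + B * 2 powr b / b"
        if z: "z \<in> ball 0 1" for z
        by (rule growth[OF b \<phi>d z0 bd A0 z])
      have val: "A + B * 2 powr b / b = \<epsilon> / 2"
        unfolding A_def B_def e1_def using b C by (intro alg2) auto
      have w1: "wnorm b (\<lambda>z. Sg g (F (rr n)) z - h z) \<le> \<epsilon> / 2"
        by (rule wnorm_le) (use est val in metis)
      have w0: "0 \<le> wnorm b (\<lambda>z. Sg g (F (rr n)) z - h z)"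
        by (rule wnorm_nonneg[OF est])
      show "norm (wnorm b (\<lambda>z. Sg g (F (rr n)) z - h z) - 0) < \<epsilon>"
        using w0 w1 \<epsilon> by simp
    qed
  qed
  show ?thesis using rr hH lim by blast
qed
definition cT :: "nat \<Rightarrow> real \<Rightarrow> complex \<Rightarrow> real" where
  "cT s a p = (1 - (cmod p)\<^sup>2) powr (real s - a) / 2 ^ s"

definition T :: "nat \<Rightarrow> real \<Rightarrow> complex \<Rightarrow> complex \<Rightarrow> complex" where
  "T s a p z = of_real (cT s a p) / (1 - cnj p * z) ^ s"

lemma den_bound:
  assumes "cmod p < 1" "cmod z < 1"
  shows "1 - cmod p * cmod z \<le> cmod (1 - cnj p * z)"
proof -
  have "cmod (cnj p * z) = cmod p * cmod z" by (simp add: norm_mult)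
  then show ?thesis using norm_triangle_ineq2[of 1 "cnj p * z"] by simp
qed

lemma den_pos:
  assumes "cmod p < 1" "cmod z < 1"
  shows "0 < 1 - cmod p * cmod z"
proof -
  have "cmod p * cmod z \<le> cmod p * 1" using assms by (intro mult_left_mono) auto
  then show ?thesis using assms by simp
qed

lemma den_nz:
  assumes "cmod p < 1" "cmod z < 1"
  shows "1 - cnj p * z \<noteq> 0"
  using den_bound[OF assms] den_pos[OF assms] by auto

lemma T_deriv:
  assumes p: "cmod p < 1" and z: "cmod z < 1"
  shows "(T (Suc m) a p has_field_derivative
           of_real (cT (Suc m) a p) * of_nat (Suc m) * cnj p / (1 - cnj p * z) ^ (Suc m + 1)) (at z)"
proof -
  have nz: "1 - cnj p * z \<noteq> 0" using den_nz[OF p z] .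
  show ?thesis
    unfolding T_def[abs_def]
    apply (rule derivative_eq_intros refl | use nz in simp)+
    done
qed

lemma cT_nonneg: "0 \<le> cT s a p" by (simp add: cT_def)

lemma T_hol: "cmod p < 1 \<Longrightarrow> T (Suc m) a p holomorphic_on ball 0 1"
  using T_deriv holomorphic_on_open[OF open_ball] by fastforce

lemma T_deriv_eq: "cmod p < 1 \<Longrightarrow> cmod z < 1 \<Longrightarrow>
   deriv (T (Suc m) a p) z = of_real (cT (Suc m) a p) * of_nat (Suc m) * cnj p / (1 - cnj p * z) ^ (Suc m + 1)"
  by (rule DERIV_imp_deriv[OF T_deriv])

lemma T_weighted:
  assumes p: "cmod p < 1" and z: "cmod z < 1" and a: "0 \<le> a" "a \<le> real (Suc m)"
  shows "(1 - (cmod z)\<^sup>2) powr a * cmod (T (Suc m) a p z) \<le> 1"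
proof -
  define s where "s = Suc m"
  define D where "D = cmod (1 - cnj p * z)"
  have D: "0 < D" using den_nz[OF p z] by (simp add: D_def)
  have Dz: "(1 - (cmod z)\<^sup>2) \<le> 2 * D"
  proof -
    have "cmod p * cmod z \<le> 1 * cmod z" using p by (intro mult_right_mono) auto
    then have "1 - cmod z \<le> D" using den_bound[OF p z] by (simp add: D_def)
    moreover have "0 \<le> (1 - cmod z) * (1 - cmod z)" by simp
    then have "(1 - (cmod z)\<^sup>2) \<le> 2 * (1 - cmod z)"
      by (simp add: power2_eq_square algebra_simps)
    ultimately show ?thesis by (simp add: algebra_simps)
  qed
  have Dp: "(1 - (cmod p)\<^sup>2) \<le> 2 * D"
  proof -
    have "cmod p * cmod z \<le> cmod p * 1" using z by (intro mult_left_mono) auto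
    then have "1 - cmod p \<le> D" using den_bound[OF p z] by (simp add: D_def)
    moreover have "0 \<le> (1 - cmod p) * (1 - cmod p)" by simp
    then have "(1 - (cmod p)\<^sup>2) \<le> 2 * (1 - cmod p)"
      by (simp add: power2_eq_square algebra_simps)
    ultimately show ?thesis by (simp add: algebra_simps)
  qed
  have wz: "0 \<le> 1 - (cmod z)\<^sup>2" using weight_pos[of z] z by simp
  have wp: "0 \<le> 1 - (cmod p)\<^sup>2" using weight_pos[of p] p by simp
  have key: "(1 - (cmod z)\<^sup>2) powr a * (1 - (cmod p)\<^sup>2) powr (real s - a) \<le> 2 ^ s * D ^ s"
  proof -
    have "(1 - (cmod z)\<^sup>2) powr a * (1 - (cmod p)\<^sup>2) powr (real s - a)
          \<le> (2 * D) powr a * (2 * D) powr (real s - a)"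
      using Dz Dp wz wp a by (intro mult_mono powr_mono2) (auto simp: s_def)
    also have "\<dots> = (2 * D) powr (real s)" by (simp add: powr_add[symmetric])
    also have "\<dots> = (2 * D) ^ s" using D by (simp add: powr_realpow)
    finally show ?thesis by (simp add: power_mult_distrib)
  qed
  have "cmod (T s a p z) = cT s a p / D ^ s"
    by (simp add: T_def D_def norm_divide norm_power cT_nonneg)
  then have "(1 - (cmod z)\<^sup>2) powr a * cmod (T s a p z)
      = ((1 - (cmod z)\<^sup>2) powr a * (1 - (cmod p)\<^sup>2) powr (real s - a)) / (2 ^ s * D ^ s)"
    by (simp add: cT_def)
  also have "\<dots> \<le> 1" using key D by simp
  finally show ?thesis by (simp add: s_def)
qed

lemma T_at_p:
  assumes p: "cmod p < 1" and a: "a \<le> real (Suc m)"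
  shows "cmod (deriv (T (Suc m) a p) p) * (1 - (cmod p)\<^sup>2) powr (a + 1) = real (Suc m) * cmod p / 2 ^ (Suc m)"
proof -
  define u where "u = 1 - (cmod p)\<^sup>2"
  have u: "0 < u" using weight_pos[of p] p by (simp add: u_def)
  have e: "1 - cnj p * p = of_real u" using complex_norm_square[of p] by (simp add: u_def mult.commute)
  have d: "cmod (deriv (T (Suc m) a p) p) = cT (Suc m) a p * real (Suc m) * cmod p / u ^ (Suc m + 1)"
    using T_deriv_eq[OF p p] u by (simp add: e norm_mult norm_divide norm_power cT_nonneg del: of_nat_Suc)
  have pw0: "u powr (real (Suc m) - a) * u powr (a + 1) = u powr (real (Suc m + 1))"
    by (simp add: powr_add[symmetric])
  have pw: "u powr (real (Suc m) - a) * u powr (a + 1) = u ^ (Suc m + 1)"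
    unfolding pw0 by (rule powr_realpow[OF u])
  have nz: "u ^ (Suc m + 1) \<noteq> 0" using u by simp
  have "cmod (deriv (T (Suc m) a p) p) * u powr (a + 1)
      = (u powr (real (Suc m) - a) * u powr (a + 1)) / u ^ (Suc m + 1) * (real (Suc m) * cmod p / 2 ^ Suc m)"
    unfolding d cT_def u_def[symmetric] by (simp add: field_simps)
  also have "\<dots> = real (Suc m) * cmod p / 2 ^ Suc m"
    unfolding pw using nz by simp
  finally show ?thesis by (simp add: u_def)
qed

lemma T_dbound:
  assumes p: "cmod p < 1" and w: "cmod w \<le> r" and r: "r < 1"
  shows "cmod (deriv (T (Suc m) a p) w) \<le> cT (Suc m) a p * real (Suc m) / (1 - r) ^ (Suc m + 1)"
proof -
  have wb: "cmod w < 1" using w r by simp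
  have r0: "0 \<le> r" using w norm_ge_zero order_trans by blast
  have "cmod p * cmod w \<le> 1 * r" using p w r0 by (intro mult_mono) auto
  then have le: "1 - r \<le> cmod (1 - cnj p * w)" using den_bound[OF p wb] by simp
  have pos: "0 < 1 - r" using r by simp
  have "cmod (deriv (T (Suc m) a p) w) = cT (Suc m) a p * real (Suc m) * cmod p / cmod (1 - cnj p * w) ^ (Suc m + 1)"
    using T_deriv_eq[OF p wb] by (simp add: norm_mult norm_divide norm_power cT_nonneg del: of_nat_Suc)
  also have "\<dots> \<le> cT (Suc m) a p * real (Suc m) / cmod (1 - cnj p * w) ^ (Suc m + 1)"
  proof -
    have "cT (Suc m) a p * real (Suc m) * cmod p \<le> cT (Suc m) a p * real (Suc m) * 1"
      using p cT_nonneg by (intro mult_left_mono) auto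
    then show ?thesis by (intro divide_right_mono) auto
  qed
  also have "\<dots> \<le> cT (Suc m) a p * real (Suc m) / (1 - r) ^ (Suc m + 1)"
    using le pos cT_nonneg by (intro divide_left_mono power_mono mult_pos_pos zero_less_power) auto
  finally show ?thesis .
qed

lemma Hinf_diff:
  assumes f: "f \<in> Hinf b" and h: "h \<in> Hinf b"
  shows "(\<lambda>z. f z - h z) \<in> Hinf b"
proof (rule Hinf_I)
  show "(\<lambda>z. f z - h z) holomorphic_on ball 0 1"
    using f h unfolding Hinf_def by (auto intro!: holomorphic_intros)
  fix z :: complex assume z: "z \<in> ball 0 1"
  have "cmod (f z - h z) \<le> cmod (f z) + cmod (h z)" by (rule norm_triangle_ineq4)
  then have "(1 - (cmod z)\<^sup>2) powr b * cmod (f z - h z) \<le> (1 - (cmod z)\<^sup>2) powr b * cmod (f z) + (1 - (cmod z)\<^sup>2) powr b * cmod (h z)"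
    by (simp add: distrib_left[symmetric] mult_left_mono)
  then show "(1 - (cmod z)\<^sup>2) powr b * cmod (f z - h z) \<le> wnorm b f + wnorm b h"
    using wnorm_upper[OF f z] wnorm_upper[OF h z] by linarith
qed

lemma pointwise_zero:
  assumes g: "g holomorphic_on ball 0 1" and z: "z \<in> ball 0 1"
    and p: "\<And>n. cmod (p n) < 1" and c0: "(\<lambda>n. cT (Suc m) a (p n)) \<longlonglongrightarrow> 0"
  shows "(\<lambda>n. Sg g (T (Suc m) a (p n)) z) \<longlonglongrightarrow> 0"
proof -
  define R where "R = cmod z"
  have R: "0 \<le> R" "R < 1" using z by (auto simp: R_def)
  obtain G where G: "0 \<le> G" "\<And>w. w \<in> cball 0 R \<Longrightarrow> cmod (g w) \<le> G"
    using g_bound[OF g R] by blast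
  define K where "K = G * real (Suc m) / (1 - R) ^ (Suc m + 1) * R"
  have bnd: "norm (Sg g (T (Suc m) a (p n)) z) \<le> K * cT (Suc m) a (p n)" for n
  proof -
    have sub: "cball 0 R \<subseteq> ball (0::complex) 1" using R by auto
    have hol: "T (Suc m) a (p n) holomorphic_on ball 0 1" by (rule T_hol[OF p])
    have "norm (Sg g (T (Suc m) a (p n)) z - Sg g (T (Suc m) a (p n)) 0)
          \<le> (cT (Suc m) a (p n) * real (Suc m) / (1 - R) ^ (Suc m + 1) * G) * norm (z - 0)"
    proof (rule field_differentiable_bound[OF convex_cball])
      fix w :: complex assume w: "w \<in> cball 0 R"
      then have wb: "w \<in> ball 0 1" using sub by blast
      show "(Sg g (T (Suc m) a (p n)) has_field_derivative deriv (T (Suc m) a (p n)) w * g w) (at w within cball 0 R)"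
        using Sg_deriv[OF hol g wb] by (rule has_field_derivative_at_within)
      have "cmod (deriv (T (Suc m) a (p n)) w) \<le> cT (Suc m) a (p n) * real (Suc m) / (1 - R) ^ (Suc m + 1)"
        using w R by (intro T_dbound p) auto
      show "norm (deriv (T (Suc m) a (p n)) w * g w) \<le> cT (Suc m) a (p n) * real (Suc m) / (1 - R) ^ (Suc m + 1) * G"
      proof -
        have nn: "0 \<le> cT (Suc m) a (p n) * real (Suc m) / (1 - R) ^ (Suc m + 1)"
          using cT_nonneg R by simp
        show ?thesis unfolding norm_mult using G w nn \<open>cmod (deriv (T (Suc m) a (p n)) w) \<le> _\<close>
          by (intro mult_mono) auto
      qed
    qed (use R in \<open>auto simp: R_def\<close>)
    then show ?thesis by (simp add: K_def R_def ac_simps)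
  qed
  have "(\<lambda>n. K * cT (Suc m) a (p n)) \<longlonglongrightarrow> 0"
    using tendsto_mult_right_zero[OF c0] by simp
  then show ?thesis
    by (rule Lim_null_comparison[rotated]) (use bnd in auto)
qed

lemma necessity:
  assumes g: "g holomorphic_on ball 0 1" and a: "a \<ge> 0" and b: "b \<ge> 0" and cs: "compact_Sg a b g"
  shows "cond a b g"
proof (rule ccontr)
  assume "\<not> cond a b g"
  then obtain \<epsilon> where \<epsilon>: "\<epsilon> > 0" and bad0: "\<forall>r<1. \<exists>z. r < cmod z \<and> cmod z < 1 \<and>
      \<not> ((1 - (cmod z)\<^sup>2) powr (b - a) * cmod (g z) < \<epsilon>)"
    unfolding cond_def by blast
  have bad: "\<exists>z. r < cmod z \<and> cmod z < 1 \<and> \<epsilon> \<le> (1 - (cmod z)\<^sup>2) powr (b - a) * cmod (g z)"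
    if "r < 1" for r
    using bad0 that by (simp add: not_less)
  define m where "m = nat \<lceil>a\<rceil>"
  have am: "a \<le> real (Suc m)" "a < real (Suc m)"
  proof -
    have "a \<le> real m" using a by (simp add: m_def)
    then show "a \<le> real (Suc m)" "a < real (Suc m)" by auto
  qed
  have "\<forall>n. \<exists>z. 1 - inverse (real (Suc n)) / 2 < cmod z \<and> cmod z < 1 \<and>
      \<epsilon> \<le> (1 - (cmod z)\<^sup>2) powr (b - a) * cmod (g z)"
  proof
    fix n
    have "1 - inverse (real (Suc n)) / 2 < 1" by simp
    from bad[OF this] show "\<exists>z. 1 - inverse (real (Suc n)) / 2 < cmod z \<and> cmod z < 1 \<and>
      \<epsilon> \<le> (1 - (cmod z)\<^sup>2) powr (b - a) * cmod (g z)" .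
  qed
  then obtain p where pn: "\<And>n. 1 - inverse (real (Suc n)) / 2 < cmod (p n)" and p1: "\<And>n. cmod (p n) < 1"
    and pe: "\<And>n. \<epsilon> \<le> (1 - (cmod (p n))\<^sup>2) powr (b - a) * cmod (g (p n))"
    by metis
  have phalf: "1 / 2 < cmod (p n)" for n
  proof -
    have "inverse (real (Suc n)) \<le> inverse 1" by (rule le_imp_inverse_le) auto
    then show ?thesis using pn[of n] by simp
  qed
  define F where "F = (\<lambda>n. T (Suc m) a (p n))"
  have Fhol: "F n holomorphic_on ball 0 1" for n unfolding F_def by (rule T_hol[OF p1])
  have Fw: "(1 - (cmod z)\<^sup>2) powr a * cmod (F n z) \<le> 1" if "z \<in> ball 0 1" for n z
    unfolding F_def using T_weighted[OF p1 _ a am(1)] that by simp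
  have FH: "F n \<in> Hinf a \<and> wnorm a (F n) \<le> 1" for n
    using Hinf_I[OF Fhol[of n] Fw[of _ n]] wnorm_le[OF Fw[of _ n]] by blast
  have SgH: "Sg g (F n) \<in> Hinf b" for n
    using cs FH unfolding compact_Sg_def by blast
  obtain rr h where rr: "strict_mono rr" and hH: "h \<in> Hinf b"
    and lim: "(\<lambda>n. wnorm b (\<lambda>z. Sg g (F (rr n)) z - h z)) \<longlonglongrightarrow> 0"
    using cs FH unfolding compact_Sg_def by blast
  have u0: "(\<lambda>n. 1 - (cmod (p n))\<^sup>2) \<longlonglongrightarrow> 0"
  proof (rule Lim_null_comparison[rotated])
    show "(\<lambda>n. 2 * inverse (real (Suc n))) \<longlonglongrightarrow> 0"
      using tendsto_mult_right_zero[OF LIMSEQ_inverse_real_of_nat] by simp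
    show "\<forall>\<^sub>F n in sequentially. norm (1 - (cmod (p n))\<^sup>2) \<le> 2 * inverse (real (Suc n))"
    proof (intro always_eventually allI)
      fix n
      have q: "0 < 1 - (cmod (p n))\<^sup>2" using weight_pos[of "p n"] p1 by simp
      have e1: "0 \<le> (1 - cmod (p n)) * (1 - cmod (p n))" by simp
      have "1 - (cmod (p n))\<^sup>2 \<le> 2 * (1 - cmod (p n))" using e1 by (simp add: power2_eq_square algebra_simps)
      also have "\<dots> \<le> 2 * inverse (real (Suc n))"
      proof -
        define iv where "iv = inverse (real (Suc n))"
        have "1 - iv / 2 < cmod (p n)" using pn[of n] by (simp add: iv_def)
        then have "2 - iv < 2 * cmod (p n)" by (simp add: field_simps)
        moreover have "0 \<le> iv" by (simp add: iv_def)
        ultimately show ?thesis unfolding iv_def[symmetric] by (simp add: algebra_simps)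
      qed
      finally show "norm (1 - (cmod (p n))\<^sup>2) \<le> 2 * inverse (real (Suc n))" using q by simp
    qed
  qed
  have c0: "(\<lambda>n. cT (Suc m) a (p n)) \<longlonglongrightarrow> 0"
    unfolding cT_def
  proof (rule tendsto_divide_zero, rule tendsto_zero_powrI[OF u0 tendsto_const])
    show "\<forall>\<^sub>F n in sequentially. 0 \<le> 1 - (cmod (p n))\<^sup>2"
      using weight_pos[of "p _"] p1 by (auto intro!: always_eventually less_imp_le)
    show "0 < real (Suc m) - a" using am by simp
  qed
  have pz: "(\<lambda>n. Sg g (F n) z) \<longlonglongrightarrow> 0" if "z \<in> ball 0 1" for z
    unfolding F_def by (rule pointwise_zero[OF g that p1 c0])
  have h0: "h z = 0" if z: "z \<in> ball 0 1" for z
  proof -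
    have wpos: "0 < (1 - (cmod z)\<^sup>2) powr b" using weight_pos[OF z] by simp
    have "(\<lambda>n. Sg g (F (rr n)) z - h z) \<longlonglongrightarrow> 0"
    proof (rule Lim_null_comparison[rotated])
      show "(\<lambda>n. wnorm b (\<lambda>z. Sg g (F (rr n)) z - h z) / (1 - (cmod z)\<^sup>2) powr b) \<longlonglongrightarrow> 0"
        by (rule tendsto_divide_zero[OF lim])
      show "\<forall>\<^sub>F n in sequentially. norm (Sg g (F (rr n)) z - h z) \<le> wnorm b (\<lambda>z. Sg g (F (rr n)) z - h z) / (1 - (cmod z)\<^sup>2) powr b"
      proof (intro always_eventually allI)
        fix n
        have "(1 - (cmod z)\<^sup>2) powr b * cmod (Sg g (F (rr n)) z - h z) \<le> wnorm b (\<lambda>z. Sg g (F (rr n)) z - h z)"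
          using wnorm_upper[OF Hinf_diff[OF SgH hH] z] .
        then show "norm (Sg g (F (rr n)) z - h z) \<le> wnorm b (\<lambda>z. Sg g (F (rr n)) z - h z) / (1 - (cmod z)\<^sup>2) powr b"
          using wpos by (simp add: pos_le_divide_eq mult.commute)
      qed
    qed
    then have l1: "(\<lambda>n. Sg g (F (rr n)) z) \<longlonglongrightarrow> h z" by (simp add: Lim_null[symmetric])
    have l2: "(\<lambda>n. Sg g (F (rr n)) z) \<longlonglongrightarrow> 0"
      using LIMSEQ_subseq_LIMSEQ[OF pz[OF z] rr] by (simp add: comp_def)
    show ?thesis using LIMSEQ_unique[OF l1 l2] .
  qed
  define \<delta> where "\<delta> = \<epsilon> / (2 * 2 ^ Suc m * 4 powr (b + 1))"
  have \<delta>: "\<delta> > 0" using \<epsilon> by (simp add: \<delta>_def)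
  have lower: "\<delta> \<le> wnorm b (\<lambda>z. Sg g (F k) z - h z)" for k
  proof -
    define q where "q = p k"
    have qb: "q \<in> ball 0 1" using p1 by (simp add: q_def)
    define u where "u = 1 - (cmod q)\<^sup>2"
    have u: "0 < u" using weight_pos[OF qb] by (simp add: u_def)
    define N where "N = wnorm b (Sg g (F k))"
    have eqw: "wnorm b (\<lambda>z. Sg g (F k) z - h z) = N"
      unfolding N_def wnorm_def using h0 by (intro SUP_cong) auto
    have Nb: "(1 - (cmod w)\<^sup>2) powr b * cmod (Sg g (F k) w) \<le> N" if "w \<in> ball 0 1" for w
      unfolding N_def by (rule wnorm_upper[OF SgH that])
    have dc: "cmod (deriv (Sg g (F k)) q) \<le> 4 powr (b+1) * N / u powr (b+1)"
      using wcauchy[OF Sg_holo[OF Fhol g] b Nb qb] by (simp add: u_def)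
    have de: "deriv (Sg g (F k)) q = deriv (F k) q * g q"
      by (rule Sg_deriv_eq[OF Fhol g qb])
    define X where "X = cmod (deriv (F k) q)"
    define Y where "Y = cmod (g q)"
    have X0: "0 \<le> X" "0 \<le> Y" by (auto simp: X_def Y_def)
    have XY: "X * Y * u powr (b+1) \<le> 4 powr (b+1) * N"
      using dc u unfolding de norm_mult X_def[symmetric] Y_def[symmetric] by (simp add: pos_le_divide_eq)
    have Xe: "X * u powr (a+1) = real (Suc m) * cmod q / 2 ^ Suc m"
      unfolding X_def u_def F_def q_def using T_at_p[OF p1 am(1)] by simp
    have Xl: "1 / (2 * 2 ^ Suc m) \<le> X * u powr (a+1)"
    proof -
      have "cmod q \<le> real (Suc m) * cmod q" using mult_right_mono[of 1 "real (Suc m)" "cmod q"] by simp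
      then have "1 / 2 \<le> real (Suc m) * cmod q" using phalf[of k] unfolding q_def by linarith
      then have "(1 / 2) / (2::real) ^ Suc m \<le> real (Suc m) * cmod q / 2 ^ Suc m"
        by (rule divide_right_mono) simp
      then show ?thesis unfolding Xe by (simp add: q_def)
    qed
    have Ye: "\<epsilon> \<le> u powr (b - a) * Y" using pe[of k] by (simp add: u_def Y_def q_def)
    have "\<epsilon> / (2 * 2 ^ Suc m) = (1 / (2 * 2 ^ Suc m)) * \<epsilon>" by simp
    also have "\<dots> \<le> (X * u powr (a+1)) * (u powr (b - a) * Y)"
      using Xl Ye \<epsilon> X0 by (intro mult_mono) auto
    also have "\<dots> = X * Y * (u powr (a+1) * u powr (b - a))" by (simp add: ac_simps)
    also have "u powr (a+1) * u powr (b - a) = u powr (b+1)" by (simp add: powr_add[symmetric] add.commute)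
    finally have "\<epsilon> / (2 * 2 ^ Suc m) \<le> 4 powr (b+1) * N" using XY by linarith
    then have "\<delta> \<le> N" unfolding \<delta>_def by (simp add: divide_le_eq field_simps)
    then show ?thesis using eqw by simp
  qed
  obtain n0 where "\<forall>n\<ge>n0. norm (wnorm b (\<lambda>z. Sg g (F (rr n)) z - h z) - 0) < \<delta>"
    using lim \<delta> unfolding LIMSEQ_iff by blast
  then have "wnorm b (\<lambda>z. Sg g (F (rr n0)) z - h z) < \<delta>" by auto
  with lower[of "rr n0"] show False by linarith
qed

lemma cond_zero:
  assumes g: "g holomorphic_on ball 0 1" and a: "a \<ge> 0" and c: "cond a 0 g" and z0: "z0 \<in> ball 0 1"
  shows "g z0 = 0"
proof -
  have le: "cmod (g z0) \<le> \<epsilon>" if \<epsilon>: "\<epsilon> > 0" for \<epsilon>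
  proof -
    obtain r where r: "r < 1" "\<And>z. r < cmod z \<and> cmod z < 1 \<Longrightarrow> (1 - (cmod z)\<^sup>2) powr (0 - a) * cmod (g z) < \<epsilon>"
      using c \<epsilon> unfolding cond_def by meson
    have gz: "cmod (g z) < \<epsilon>" if z: "r < cmod z" "cmod z < 1" for z
    proof -
      have zb: "z \<in> ball 0 1" using z by simp
      have w: "0 < (1 - (cmod z)\<^sup>2) powr a" using weight_pos[OF zb] by simp
      have w1: "(1 - (cmod z)\<^sup>2) powr a \<le> 1" using weight_pos[OF zb] a by (intro powr_le1) auto
      have "(1 - (cmod z)\<^sup>2) powr (0 - a) = inverse ((1 - (cmod z)\<^sup>2) powr a)"
        by (simp add: powr_minus)
      also have "\<dots> \<ge> 1" using w w1 by (simp add: one_le_inverse)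
      finally have "1 \<le> (1 - (cmod z)\<^sup>2) powr (0 - a)" .
      then have "1 * cmod (g z) \<le> (1 - (cmod z)\<^sup>2) powr (0 - a) * cmod (g z)"
        by (intro mult_right_mono) auto
      then show ?thesis using r(2)[OF conjI[OF z]] by linarith
    qed
    define \<rho> where "\<rho> = (max r (cmod z0) + 1) / 2"
    have m1: "max r (cmod z0) < 1" using r z0 by simp
    have \<rho>: "r < \<rho>" "cmod z0 < \<rho>" "\<rho> < 1"
      using m1 unfolding \<rho>_def by (auto simp: field_simps)
    have \<rho>0: "0 < \<rho>" using \<rho>(2) norm_ge_zero[of z0] by linarith
    have sub: "cball 0 \<rho> \<subseteq> ball (0::complex) 1" using \<rho> by auto
    show ?thesis
    proof (rule maximum_modulus_frontier[of g "ball 0 \<rho>"])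
      show "g holomorphic_on interior (ball 0 \<rho>)"
      proof -
        have "ball 0 \<rho> \<subseteq> ball (0::complex) 1" using sub ball_subset_cball by blast
        then show ?thesis using holomorphic_on_subset[OF g] by simp
      qed
      show "continuous_on (closure (ball 0 \<rho>)) g"
        using continuous_on_subset[OF holomorphic_on_imp_continuous_on[OF g]] sub \<rho>0 by simp
      show "bounded (ball (0::complex) \<rho>)" by simp
      show "z0 \<in> ball 0 \<rho>" using \<rho> by simp
      fix z :: complex assume "z \<in> frontier (ball 0 \<rho>)"
      then have "cmod z = \<rho>" using \<rho>0 by simp
      then show "cmod (g z) \<le> \<epsilon>" using gz[of z] \<rho> by fastforce
    qed
  qed
  show ?thesis
  proof (rule ccontr)
    assume "g z0 \<noteq> 0"
    then have "0 < cmod (g z0) / 2" by simp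
    from le[OF this] show False using \<open>g z0 \<noteq> 0\<close> by simp
  qed
qed

lemma zero_compact:
  assumes g: "g holomorphic_on ball 0 1" and gz: "\<forall>z\<in>ball 0 1. g z = 0"
  shows "compact_Sg a 0 g"
proof -
  have Sz: "Sg g f z = 0" if f: "f holomorphic_on ball 0 1" and z: "z \<in> ball 0 1" for f z
  proof -
    have "norm (Sg g f z - Sg g f 0) \<le> 0 * norm (z - 0)"
    proof (rule field_differentiable_bound[OF convex_ball])
      fix w :: complex assume w: "w \<in> ball 0 1"
      show "(Sg g f has_field_derivative deriv f w * g w) (at w within ball 0 1)"
        using Sg_deriv[OF f g w] by (rule has_field_derivative_at_within)
      show "norm (deriv f w * g w) \<le> 0" using gz w by simp
    qed (use z in auto)
    then show ?thesis by simp
  qed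
  have in0: "Sg g f \<in> Hinf 0" if f: "f \<in> Hinf a" for f
  proof (rule Hinf_I)
    have fh: "f holomorphic_on ball 0 1" using f by (simp add: Hinf_def)
    show "Sg g f holomorphic_on ball 0 1" by (rule Sg_holo[OF fh g])
    fix z :: complex assume "z \<in> ball 0 1"
    then show "(1 - (cmod z)\<^sup>2) powr 0 * cmod (Sg g f z) \<le> 0" using Sz[OF fh] by simp
  qed
  have zH: "(\<lambda>z. 0) \<in> Hinf 0"
    by (rule Hinf_I[where M=0]) (auto intro: holomorphic_intros)
  show ?thesis unfolding compact_Sg_def
  proof (intro conjI ballI allI impI)
    fix f assume "f \<in> Hinf a" then show "Sg g f \<in> Hinf 0" by (rule in0)
  next
    fix F :: "nat \<Rightarrow> complex \<Rightarrow> complex" assume F: "\<forall>n. F n \<in> Hinf a \<and> wnorm a (F n) \<le> 1"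
    have w: "wnorm 0 (\<lambda>z. Sg g (F n) z - 0) = 0" for n
    proof -
      have fh: "F n holomorphic_on ball 0 1" using F by (simp add: Hinf_def)
      have b: "\<And>z. z \<in> ball 0 1 \<Longrightarrow> (1 - (cmod z)\<^sup>2) powr 0 * cmod (Sg g (F n) z - 0) \<le> 0"
        using Sz[OF fh] by simp
      show ?thesis using wnorm_le[OF b] wnorm_nonneg[OF b] by linarith
    qed
    show "\<exists>r h. strict_mono r \<and> h \<in> Hinf 0 \<and> (\<lambda>n. wnorm 0 (\<lambda>z. Sg g (F (r n)) z - h z)) \<longlonglongrightarrow> 0"
      using w zH by (intro exI[of _ id] exI[of _ "\<lambda>z. 0"]) (auto simp: strict_mono_def)
  qed
qed

theorem theorem5:
  fixes g :: "complex \<Rightarrow> complex" and \<alpha> \<beta> :: real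
  assumes "g holomorphic_on ball 0 1" and "\<alpha> \<ge> 0" and "\<beta> \<ge> 0"
  shows "(compact_Sg \<alpha> 0 g \<longleftrightarrow> (\<forall>z\<in>ball 0 1. g z = 0)) \<and>
         (\<beta> > 0 \<longrightarrow>
            (compact_Sg \<alpha> \<beta> g \<longleftrightarrow>
               (\<forall>\<epsilon>>0. \<exists>r<1. \<forall>z. r < cmod z \<and> cmod z < 1 \<longrightarrow>
                   (1 - (cmod z)\<^sup>2) powr (\<beta> - \<alpha>) * cmod (g z) < \<epsilon>)))"
proof (intro conjI impI)
  show "compact_Sg \<alpha> 0 g \<longleftrightarrow> (\<forall>z\<in>ball 0 1. g z = 0)"
  proof
    assume "compact_Sg \<alpha> 0 g"
    then have "cond \<alpha> 0 g" using necessity[OF assms(1,2)] by simp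
    then show "\<forall>z\<in>ball 0 1. g z = 0" using cond_zero[OF assms(1,2)] by blast
  next
    assume "\<forall>z\<in>ball 0 1. g z = 0"
    then show "compact_Sg \<alpha> 0 g" by (rule zero_compact[OF assms(1)])
  qed
next
  assume b: "\<beta> > 0"
  have "compact_Sg \<alpha> \<beta> g \<longleftrightarrow> cond \<alpha> \<beta> g"
  proof
    assume "compact_Sg \<alpha> \<beta> g"
    then show "cond \<alpha> \<beta> g" by (rule necessity[OF assms])
  next
    assume c: "cond \<alpha> \<beta> g"
    show "compact_Sg \<alpha> \<beta> g" unfolding compact_Sg_def
      using Sg_in[OF assms(1,2) b c] Sg_seq[OF assms(1,2) b c] by blast
  qed
  then show "compact_Sg \<alpha> \<beta> g \<longleftrightarrow>
               (\<forall>\<epsilon>>0. \<exists>r<1. \<forall>z. r < cmod z \<and> cmod z < 1 \<longrightarrow>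
                   (1 - (cmod z)\<^sup>2) powr (\<beta> - \<alpha>) * cmod (g z) < \<epsilon>)"
    by (simp add: cond_def)
qed
end
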